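(* Let $(X,\tau)$ be a topological space, $\mathcal{V}\in T(\tau)$, $\mathcal{B}=\mathcal{B}(\mathcal{V}_\omega)$, and let $\alpha$ be an interior preserving open cover of $X$ with $U_\alpha\in\mathcal{V}$. Then every $A\in\alpha$ belongs to $\mathcal{B}$.
   Context: An open cover $\alpha$ of $X$ is interior preserving if for every $x\in X$ the set $\bigcap\{N\in\alpha:x\in N\}$ is open; then $U_\alpha\subseteq X\times X$ is the relation with $U_\alpha(x)=\bigcap\{N\in\alpha:x\in N\}$ (a transitive relation). $T(\tau)$ is the set of compatible transitive quasi-uniformities on $(X,\tau)$. For a quasi-uniformity $\mathcal{V}$, $\mathcal{V}_\omega$ is the coarsest quasi-uniformity inducing the same quasi-proximity as $\mathcal{V}$. For $N\subseteq X$, $U_N=(N\times N)\cup((X\setminus N)\times X)$, and for a compatible quasi-uniformity $\mathcal{W}$, $\mathcal{B}(\mathcal{W})=\{N\in\tau:U_N\in\mathcal{W}\}$. *)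

theory Defs
  imports "HOL-Analysis.Analysis"
begin

definition quasi_uniformity :: "'a set \<Rightarrow> ('a \<times> 'a) set set \<Rightarrow> bool" where
  "quasi_uniformity X \<U> \<longleftrightarrow>
     \<U> \<noteq> {} \<and>
     (\<forall>U\<in>\<U>. Id_on X \<subseteq> U \<and> U \<subseteq> X \<times> X) \<and>
     (\<forall>U V. U \<in> \<U> \<and> U \<subseteq> V \<and> V \<subseteq> X \<times> X \<longrightarrow> V \<in> \<U>) \<and>
     (\<forall>U\<in>\<U>. \<forall>V\<in>\<U>. U \<inter> V \<in> \<U>) \<and>
     (\<forall>U\<in>\<U>. \<exists>V\<in>\<U>. V O V \<subseteq> U)"

definition qu_open :: "'a set \<Rightarrow> ('a \<times> 'a) set set \<Rightarrow> 'a set \<Rightarrow> bool" where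
  "qu_open X \<U> G \<longleftrightarrow> G \<subseteq> X \<and> (\<forall>x\<in>G. \<exists>U\<in>\<U>. U `` {x} \<subseteq> G)"

definition compatible_qu :: "'a topology \<Rightarrow> ('a \<times> 'a) set set \<Rightarrow> bool" where
  "compatible_qu \<tau> \<U> \<longleftrightarrow> quasi_uniformity (topspace \<tau>) \<U> \<and>
     (\<forall>G. openin \<tau> G \<longleftrightarrow> qu_open (topspace \<tau>) \<U> G)"

definition transitive_qu :: "('a \<times> 'a) set set \<Rightarrow> bool" where
  "transitive_qu \<U> \<longleftrightarrow> (\<forall>U\<in>\<U>. \<exists>V\<in>\<U>. trans V \<and> V \<subseteq> U)"

definition T_qu :: "'a topology \<Rightarrow> ('a \<times> 'a) set set set" where
  "T_qu \<tau> = {\<U>. compatible_qu \<tau> \<U> \<and> transitive_qu \<U>}"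

definition qprox :: "'a set \<Rightarrow> ('a \<times> 'a) set set \<Rightarrow> ('a set \<times> 'a set) set" where
  "qprox X \<U> = {(A, B). A \<subseteq> X \<and> B \<subseteq> X \<and> (\<forall>U\<in>\<U>. U `` A \<inter> B \<noteq> {})}"

definition V_omega :: "'a set \<Rightarrow> ('a \<times> 'a) set set \<Rightarrow> ('a \<times> 'a) set set" where
  "V_omega X \<V> = (THE \<W>. quasi_uniformity X \<W> \<and> qprox X \<W> = qprox X \<V> \<and>
      (\<forall>\<W>'. quasi_uniformity X \<W>' \<and> qprox X \<W>' = qprox X \<V> \<longrightarrow> \<W> \<subseteq> \<W>'))"

definition U_set :: "'a set \<Rightarrow> 'a set \<Rightarrow> ('a \<times> 'a) set" where
  "U_set X N = (N \<times> N) \<union> ((X - N) \<times> X)"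

definition B_qu :: "'a topology \<Rightarrow> ('a \<times> 'a) set set \<Rightarrow> 'a set set" where
  "B_qu \<tau> \<W> = {N. openin \<tau> N \<and> U_set (topspace \<tau>) N \<in> \<W>}"

definition interior_preserving_open_cover :: "'a topology \<Rightarrow> 'a set set \<Rightarrow> bool" where
  "interior_preserving_open_cover \<tau> \<alpha> \<longleftrightarrow>
     (\<forall>N\<in>\<alpha>. openin \<tau> N) \<and> \<Union>\<alpha> = topspace \<tau> \<and>
     (\<forall>x\<in>topspace \<tau>. openin \<tau> (\<Inter>{N\<in>\<alpha>. x \<in> N}))"

definition U_cover :: "'a set \<Rightarrow> 'a set set \<Rightarrow> ('a \<times> 'a) set" where
  "U_cover X \<alpha> = {(x, y). x \<in> X \<and> y \<in> \<Inter>{N\<in>\<alpha>. x \<in> N}}"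

end

theory Submission
  imports Defs
begin

definition UAB :: "'a set \<Rightarrow> 'a set \<Rightarrow> 'a set \<Rightarrow> ('a \<times> 'a) set" where
  "UAB X A B = {(x,y). x \<in> X \<and> y \<in> X \<and> (x \<notin> A \<or> y \<notin> B)}"

definition SS :: "'a set \<Rightarrow> ('a \<times> 'a) set set \<Rightarrow> ('a \<times> 'a) set set" where
  "SS X V = {UAB X A B | A B. A \<subseteq> X \<and> B \<subseteq> X \<and> (A,B) \<notin> qprox X V}"

definition Wc :: "'a set \<Rightarrow> ('a \<times> 'a) set set \<Rightarrow> ('a \<times> 'a) set set" where
  "Wc X V = {U. U \<subseteq> X \<times> X \<and> (\<exists>F. finite F \<and> F \<subseteq> SS X V \<and> (X \<times> X) \<inter> \<Inter>F \<subseteq> U)}"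

lemma qu_parts:
  assumes "quasi_uniformity X V"
  shows "V \<noteq> {}" "\<forall>U\<in>V. Id_on X \<subseteq> U \<and> U \<subseteq> X \<times> X"
    "\<forall>U W. U \<in> V \<and> U \<subseteq> W \<and> W \<subseteq> X \<times> X \<longrightarrow> W \<in> V"
    "\<forall>U\<in>V. \<forall>W\<in>V. U \<inter> W \<in> V" "\<forall>U\<in>V. \<exists>W\<in>V. W O W \<subseteq> U"
proof -
  have h: "V \<noteq> {} \<and> (\<forall>U\<in>V. Id_on X \<subseteq> U \<and> U \<subseteq> X \<times> X) \<and>
    (\<forall>U W. U \<in> V \<and> U \<subseteq> W \<and> W \<subseteq> X \<times> X \<longrightarrow> W \<in> V) \<and>
    (\<forall>U\<in>V. \<forall>W\<in>V. U \<inter> W \<in> V) \<and> (\<forall>U\<in>V. \<exists>W\<in>V. W O W \<subseteq> U)"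
    using assms unfolding quasi_uniformity_def .
  show "V \<noteq> {}" using h by (rule conjunct1)
  show "\<forall>U\<in>V. Id_on X \<subseteq> U \<and> U \<subseteq> X \<times> X" using h[THEN conjunct2] by (rule conjunct1)
  show "\<forall>U W. U \<in> V \<and> U \<subseteq> W \<and> W \<subseteq> X \<times> X \<longrightarrow> W \<in> V" using h[THEN conjunct2, THEN conjunct2] by (rule conjunct1)
  show "\<forall>U\<in>V. \<forall>W\<in>V. U \<inter> W \<in> V" using h[THEN conjunct2, THEN conjunct2, THEN conjunct2] by (rule conjunct1)
  show "\<forall>U\<in>V. \<exists>W\<in>V. W O W \<subseteq> U" using h[THEN conjunct2, THEN conjunct2, THEN conjunct2] by (rule conjunct2)
qed

lemma qu_ne: "quasi_uniformity X V \<Longrightarrow> V \<noteq> {}"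
  using qu_parts(1) .
lemma qu_refl: "quasi_uniformity X V \<Longrightarrow> U \<in> V \<Longrightarrow> x \<in> X \<Longrightarrow> (x,x) \<in> U"
  using qu_parts(2) by blast
lemma qu_sub: "quasi_uniformity X V \<Longrightarrow> U \<in> V \<Longrightarrow> U \<subseteq> X \<times> X"
  using qu_parts(2) by blast
lemma qu_up: "quasi_uniformity X V \<Longrightarrow> U \<in> V \<Longrightarrow> U \<subseteq> W \<Longrightarrow> W \<subseteq> X \<times> X \<Longrightarrow> W \<in> V"
  using qu_parts(3) by blast
lemma qu_int: "quasi_uniformity X V \<Longrightarrow> U \<in> V \<Longrightarrow> W \<in> V \<Longrightarrow> U \<inter> W \<in> V"
  using qu_parts(4) by blast
lemma qu_comp: "quasi_uniformity X V \<Longrightarrow> U \<in> V \<Longrightarrow> \<exists>W\<in>V. W O W \<subseteq> U"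
  using qu_parts(5) by blast

lemma nd_iff:
  assumes "A \<subseteq> X" "B \<subseteq> X"
  shows "(A,B) \<notin> qprox X V \<longleftrightarrow> (\<exists>U\<in>V. U `` A \<inter> B = {})"
  using assms by (auto simp: qprox_def)

lemma union_left:
  assumes QU: "quasi_uniformity X V" and h: "(A1 \<union> A2, B) \<in> qprox X V"
  shows "(A1,B) \<in> qprox X V \<or> (A2,B) \<in> qprox X V"
proof (rule ccontr)
  assume n: "\<not> ?thesis"
  have sub: "A1 \<subseteq> X" "A2 \<subseteq> X" "B \<subseteq> X" using h by (auto simp: qprox_def)
  obtain U1 where U1: "U1 \<in> V" "U1 `` A1 \<inter> B = {}" using n nd_iff[OF sub(1) sub(3)] by blast
  obtain U2 where U2: "U2 \<in> V" "U2 `` A2 \<inter> B = {}" using n nd_iff[OF sub(2) sub(3)] by blast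
  have "U1 \<inter> U2 \<in> V" using qu_int[OF QU U1(1) U2(1)] .
  moreover have "(U1 \<inter> U2) `` (A1 \<union> A2) \<inter> B = {}" using U1(2) U2(2) by blast
  moreover have "\<forall>U\<in>V. U `` (A1 \<union> A2) \<inter> B \<noteq> {}" using h by (simp add: qprox_def)
  ultimately show False by blast
qed

lemma union_right:
  assumes QU: "quasi_uniformity X V" and h: "(A, B1 \<union> B2) \<in> qprox X V"
  shows "(A,B1) \<in> qprox X V \<or> (A,B2) \<in> qprox X V"
proof (rule ccontr)
  assume n: "\<not> ?thesis"
  have sub: "B1 \<subseteq> X" "B2 \<subseteq> X" "A \<subseteq> X" using h by (auto simp: qprox_def)
  obtain U1 where U1: "U1 \<in> V" "U1 `` A \<inter> B1 = {}" using n nd_iff[OF sub(3) sub(1)] by blast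
  obtain U2 where U2: "U2 \<in> V" "U2 `` A \<inter> B2 = {}" using n nd_iff[OF sub(3) sub(2)] by blast
  have "U1 \<inter> U2 \<in> V" using qu_int[OF QU U1(1) U2(1)] .
  moreover have "(U1 \<inter> U2) `` A \<inter> (B1 \<union> B2) = {}" using U1(2) U2(2) by blast
  moreover have "\<forall>U\<in>V. U `` A \<inter> (B1 \<union> B2) \<noteq> {}" using h by (simp add: qprox_def)
  ultimately show False by blast
qed

lemma mono_qp:
  assumes "(A',B') \<in> qprox X V" "A' \<subseteq> A" "A \<subseteq> X" "B' \<subseteq> B" "B \<subseteq> X"
  shows "(A,B) \<in> qprox X V"
proof -
  have "\<forall>U\<in>V. U `` A' \<inter> B' \<noteq> {}" using assms(1) unfolding qprox_def by blast
  moreover have "U `` A' \<inter> B' \<subseteq> U `` A \<inter> B" for U using assms(2,4) by blast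
  ultimately have "\<forall>U\<in>V. U `` A \<inter> B \<noteq> {}" by blast
  then show ?thesis using assms(3,5) unfolding qprox_def by blast
qed

lemma key:
  assumes QU: "quasi_uniformity X V"
  shows "finite F \<Longrightarrow> F \<subseteq> SS X V \<Longrightarrow> \<forall>A B. (A,B) \<in> qprox X V \<longrightarrow>
     (\<exists>x\<in>A. \<exists>y\<in>B. (x,y) \<in> (X \<times> X) \<inter> \<Inter>F)"
proof (induction F rule: finite_induct)
  case empty
  show ?case
  proof (intro allI impI)
    fix A B assume h: "(A,B) \<in> qprox X V"
    obtain U where "U \<in> V" using qu_ne[OF QU] by blast
    then have "U `` A \<inter> B \<noteq> {}" using h \<open>U \<in> V\<close> by (simp add: qprox_def)
    moreover have "A \<subseteq> X" "B \<subseteq> X" using h unfolding qprox_def by auto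
    ultimately show "\<exists>x\<in>A. \<exists>y\<in>B. (x,y) \<in> (X \<times> X) \<inter> \<Inter>{}" by blast
  qed
next
  case (insert S F)
  then have IH: "\<forall>A B. (A,B) \<in> qprox X V \<longrightarrow> (\<exists>x\<in>A. \<exists>y\<in>B. (x,y) \<in> (X \<times> X) \<inter> \<Inter>F)"
    and "S \<in> SS X V" by auto
  then obtain A0 B0 where S: "S = UAB X A0 B0" "A0 \<subseteq> X" "B0 \<subseteq> X" "(A0,B0) \<notin> qprox X V"
    unfolding SS_def by blast
  show ?case
  proof (intro allI impI)
    fix A B assume h: "(A,B) \<in> qprox X V"
    have sub: "A \<subseteq> X" "B \<subseteq> X" using h unfolding qprox_def by auto
    show "\<exists>x\<in>A. \<exists>y\<in>B. (x,y) \<in> (X \<times> X) \<inter> \<Inter>(insert S F)"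
    proof (cases "(A - A0, B) \<in> qprox X V")
      case True
      then obtain x y where xy: "x \<in> A - A0" "y \<in> B" "(x,y) \<in> (X \<times> X) \<inter> \<Inter>F" using IH by blast
      then have "(x,y) \<in> S" using S(1) by (auto simp: UAB_def)
      then have "(x,y) \<in> (X \<times> X) \<inter> \<Inter>(insert S F)" using xy(3) by simp
      then show ?thesis using xy(1,2) by blast
    next
      case False
      have h2: "(A \<inter> A0, B) \<in> qprox X V" using union_left[OF QU, of "A - A0" "A \<inter> A0" B] h False
        by (simp add: Un_Diff_Int)
      show ?thesis
      proof (cases "(A \<inter> A0, B - B0) \<in> qprox X V")
        case True
        then obtain x y where xy: "x \<in> A \<inter> A0" "y \<in> B - B0" "(x,y) \<in> (X \<times> X) \<inter> \<Inter>F" using IH by blast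
        then have "(x,y) \<in> S" using S(1) by (auto simp: UAB_def)
        then have "(x,y) \<in> (X \<times> X) \<inter> \<Inter>(insert S F)" using xy(3) by simp
        then show ?thesis using xy(1,2) by blast
      next
        case False2: False
        have "(A \<inter> A0, B \<inter> B0) \<in> qprox X V"
          using union_right[OF QU, of "A \<inter> A0" "B - B0" "B \<inter> B0"] h2 False2 by (simp add: Un_Diff_Int)
        then have "(A0, B0) \<in> qprox X V" using mono_qp[of "A \<inter> A0" "B \<inter> B0" X V A0 B0] S by blast
        then show ?thesis using S by blast
      qed
    qed
  qed
qed

lemma id_sub:
  assumes QU: "quasi_uniformity X V" and "S \<in> SS X V"
  shows "Id_on X \<subseteq> S"
proof
  fix p assume "p \<in> Id_on X"
  then obtain x where p: "p = (x,x)" "x \<in> X" by auto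
  obtain A B where S: "S = UAB X A B" "A \<subseteq> X" "B \<subseteq> X" "(A,B) \<notin> qprox X V"
    using assms(2) unfolding SS_def by blast
  then obtain U where U: "U \<in> V" "U `` A \<inter> B = {}" using nd_iff by metis
  have "(x,x) \<in> U" using qu_refl[OF QU U(1) p(2)] .
  then show "p \<in> S" using U(2) S(1) p unfolding UAB_def by blast
qed

lemma comp_sub:
  assumes QU: "quasi_uniformity X V" and "S \<in> SS X V"
  shows "\<exists>F'. finite F' \<and> F' \<subseteq> SS X V \<and> ((X \<times> X) \<inter> \<Inter>F') O ((X \<times> X) \<inter> \<Inter>F') \<subseteq> S"
proof -
  obtain A B where S: "S = UAB X A B" "A \<subseteq> X" "B \<subseteq> X" "(A,B) \<notin> qprox X V"
    using assms(2) unfolding SS_def by blast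
  then obtain U where U: "U \<in> V" "U `` A \<inter> B = {}" using nd_iff by metis
  obtain W where W: "W \<in> V" "W O W \<subseteq> U" using qu_comp[OF QU U(1)] by blast
  have WX: "W \<subseteq> X \<times> X" using qu_sub[OF QU W(1)] .
  define C where "C = W `` A"
  have CX: "C \<subseteq> X" using WX unfolding C_def by blast
  have "W `` A \<inter> (X - C) = {}" unfolding C_def by blast
  then have n1: "(A, X - C) \<notin> qprox X V" using nd_iff[of A X "X - C" V] S(2) W(1) by blast
  have "W `` C \<subseteq> U `` A" using W(2) unfolding C_def by blast
  then have "W `` C \<inter> B = {}" using U(2) by blast
  then have n2: "(C, B) \<notin> qprox X V" using nd_iff[of C X B V] CX S(3) W(1) by blast
  define F' where "F' = {UAB X A (X - C), UAB X C B}"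
  have "F' \<subseteq> SS X V" unfolding F'_def SS_def using n1 n2 S CX by blast
  moreover have "((X \<times> X) \<inter> \<Inter>F') O ((X \<times> X) \<inter> \<Inter>F') \<subseteq> S"
    unfolding F'_def S(1) UAB_def by blast
  moreover have "finite F'" unfolding F'_def by simp
  ultimately show ?thesis by (intro exI[of _ F']) simp
qed

lemma WcI:
  assumes "U \<subseteq> X \<times> X" "finite F" "F \<subseteq> SS X V" "(X \<times> X) \<inter> \<Inter>F \<subseteq> U"
  shows "U \<in> Wc X V"
  unfolding Wc_def using assms by (intro CollectI conjI exI[of _ F]) auto

lemma WcE:
  assumes "U \<in> Wc X V"
  obtains F where "finite F" "F \<subseteq> SS X V" "(X \<times> X) \<inter> \<Inter>F \<subseteq> U" "U \<subseteq> X \<times> X"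
  using assms unfolding Wc_def by auto

lemma Wc_qu:
  assumes QU: "quasi_uniformity X V"
  shows "quasi_uniformity X (Wc X V)"
  unfolding quasi_uniformity_def
proof (intro conjI ballI allI impI)
  show "Wc X V \<noteq> {}"
  proof -
    have "X \<times> X \<in> Wc X V" by (rule WcI[of _ _ "{}"]) auto
    then show ?thesis by blast
  qed
next
  fix U assume "U \<in> Wc X V"
  then obtain F where F: "finite F" "F \<subseteq> SS X V" "(X \<times> X) \<inter> \<Inter>F \<subseteq> U" "U \<subseteq> X \<times> X"
    by (rule WcE)
  have "Id_on X \<subseteq> (X \<times> X) \<inter> \<Inter>F" using id_sub[OF QU] F(2) by (auto simp: Id_on_def)
  then show "Id_on X \<subseteq> U" using F(3) by blast
  show "U \<subseteq> X \<times> X" by fact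
next
  fix U W assume h: "U \<in> Wc X V \<and> U \<subseteq> W \<and> W \<subseteq> X \<times> X"
  then have "U \<in> Wc X V" by blast
  then obtain F where F: "finite F" "F \<subseteq> SS X V" "(X \<times> X) \<inter> \<Inter>F \<subseteq> U"
    by (rule WcE)
  show "W \<in> Wc X V" apply (rule WcI[OF _ F(1) F(2)]) using h F(3) by auto
next
  fix U W assume hU: "U \<in> Wc X V" and hW: "W \<in> Wc X V"
  obtain F where F: "finite F" "F \<subseteq> SS X V" "(X \<times> X) \<inter> \<Inter>F \<subseteq> U" "U \<subseteq> X \<times> X"
    using hU by (rule WcE)
  obtain G where G: "finite G" "G \<subseteq> SS X V" "(X \<times> X) \<inter> \<Inter>G \<subseteq> W" "W \<subseteq> X \<times> X"
    using hW by (rule WcE)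
  have "finite (F \<union> G)" "F \<union> G \<subseteq> SS X V" "(X \<times> X) \<inter> \<Inter>(F \<union> G) \<subseteq> U \<inter> W"
    using F G by auto
  then show "U \<inter> W \<in> Wc X V" using WcI[of "U \<inter> W" X "F \<union> G" V] F(4) by blast
next
  fix U assume "U \<in> Wc X V"
  then obtain F where F: "finite F" "F \<subseteq> SS X V" "(X \<times> X) \<inter> \<Inter>F \<subseteq> U" "U \<subseteq> X \<times> X"
    by (rule WcE)
  have "\<forall>S\<in>F. \<exists>F'. finite F' \<and> F' \<subseteq> SS X V \<and> ((X \<times> X) \<inter> \<Inter>F') O ((X \<times> X) \<inter> \<Inter>F') \<subseteq> S"
    using comp_sub[OF QU] F(2) by blast
  then obtain f where f: "\<forall>S\<in>F. finite (f S) \<and> f S \<subseteq> SS X V \<and> ((X \<times> X) \<inter> \<Inter>(f S)) O ((X \<times> X) \<inter> \<Inter>(f S)) \<subseteq> S"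
    by (rule bchoice[elim_format]) blast
  define G where "G = \<Union>(f ` F)"
  define R where "R = (X \<times> X) \<inter> \<Inter>G"
  have Gfin: "finite G" "G \<subseteq> SS X V" using f F(1) unfolding G_def by auto
  have "R \<in> Wc X V" by (rule WcI[OF _ Gfin]) (auto simp: R_def)
  moreover have "R O R \<subseteq> U"
  proof -
    have "R O R \<subseteq> X \<times> X" unfolding R_def by blast
    moreover have "R O R \<subseteq> S" if hS: "S \<in> F" for S
    proof -
      have "R \<subseteq> (X \<times> X) \<inter> \<Inter>(f S)" unfolding R_def G_def using hS by blast
      then have "R O R \<subseteq> ((X \<times> X) \<inter> \<Inter>(f S)) O ((X \<times> X) \<inter> \<Inter>(f S))" by blast
      then show ?thesis using f hS by blast
    qed
    ultimately show ?thesis using F(3) by blast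
  qed
  ultimately show "\<exists>R\<in>Wc X V. R O R \<subseteq> U" by blast
qed

lemma Wc_qprox:
  assumes QU: "quasi_uniformity X V"
  shows "qprox X (Wc X V) = qprox X V"
proof (intro set_eqI)
  fix p :: "'a set \<times> 'a set"
  obtain A B where p: "p = (A,B)" by fastforce
  show "p \<in> qprox X (Wc X V) \<longleftrightarrow> p \<in> qprox X V"
  proof
    assume h: "p \<in> qprox X (Wc X V)"
    then have sub: "A \<subseteq> X" "B \<subseteq> X" using p unfolding qprox_def by auto
    show "p \<in> qprox X V"
    proof (rule ccontr)
      assume n: "p \<notin> qprox X V"
      then have "UAB X A B \<in> SS X V" unfolding SS_def using sub p by blast
      then have "UAB X A B \<in> Wc X V"
        by (intro WcI[of _ X "{UAB X A B}"]) (auto simp: UAB_def)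
      moreover have "UAB X A B `` A \<inter> B = {}" unfolding UAB_def by blast
      moreover have "\<forall>U\<in>Wc X V. U `` A \<inter> B \<noteq> {}" using h p by (simp add: qprox_def)
      ultimately show False by blast
    qed
  next
    assume h: "p \<in> qprox X V"
    then have sub: "A \<subseteq> X" "B \<subseteq> X" using p unfolding qprox_def by auto
    have "\<forall>U\<in>Wc X V. U `` A \<inter> B \<noteq> {}"
    proof
      fix U assume "U \<in> Wc X V"
      then obtain F where F: "finite F" "F \<subseteq> SS X V" "(X \<times> X) \<inter> \<Inter>F \<subseteq> U"
        by (rule WcE)
      obtain x y where "x \<in> A" "y \<in> B" "(x,y) \<in> (X \<times> X) \<inter> \<Inter>F"
        using key[OF QU F(1) F(2)] h p by blast
      then show "U `` A \<inter> B \<noteq> {}" using F(3) by blast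
    qed
    then show "p \<in> qprox X (Wc X V)" using sub p by (simp add: qprox_def)
  qed
qed

lemma Wc_min:
  assumes QU: "quasi_uniformity X V" and QW: "quasi_uniformity X W'"
    and eq: "qprox X W' = qprox X V"
  shows "Wc X V \<subseteq> W'"
proof
  have SSin: "S \<in> W'" if hS: "S \<in> SS X V" for S
  proof -
    obtain A B where S: "S = UAB X A B" "A \<subseteq> X" "B \<subseteq> X" "(A,B) \<notin> qprox X V"
      using hS unfolding SS_def by blast
    then have "(A,B) \<notin> qprox X W'" using eq by simp
    then obtain U where U: "U \<in> W'" "U `` A \<inter> B = {}" using nd_iff S(2,3) by metis
    have "U \<subseteq> X \<times> X" using qu_sub[OF QW U(1)] .
    then have "U \<subseteq> S" using U(2) unfolding S(1) UAB_def by blast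
    moreover have "S \<subseteq> X \<times> X" unfolding S(1) UAB_def by blast
    ultimately show ?thesis using qu_up[OF QW U(1)] by blast
  qed
  have XX: "X \<times> X \<in> W'"
  proof -
    obtain U where U: "U \<in> W'" using qu_ne[OF QW] by blast
    then show ?thesis using qu_up[OF QW U] qu_sub[OF QW U] by blast
  qed
  have fin: "finite F \<Longrightarrow> F \<subseteq> SS X V \<Longrightarrow> (X \<times> X) \<inter> \<Inter>F \<in> W'" for F
  proof (induction F rule: finite_induct)
    case empty then show ?case using XX by simp
  next
    case (insert S F)
    then have "(X \<times> X) \<inter> \<Inter>F \<in> W'" "S \<in> W'" using SSin by auto
    then have "((X \<times> X) \<inter> \<Inter>F) \<inter> S \<in> W'" using qu_int[OF QW] by blast
    moreover have "((X \<times> X) \<inter> \<Inter>F) \<inter> S = (X \<times> X) \<inter> \<Inter>(insert S F)" by blast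
    ultimately show ?case by simp
  qed
  fix U assume "U \<in> Wc X V"
  then obtain F where F: "finite F" "F \<subseteq> SS X V" "(X \<times> X) \<inter> \<Inter>F \<subseteq> U" "U \<subseteq> X \<times> X"
    by (rule WcE)
  show "U \<in> W'" using qu_up[OF QW fin[OF F(1,2)] F(3) F(4)] by this
qed

lemma V_omega_eq:
  assumes QU: "quasi_uniformity X V"
  shows "V_omega X V = Wc X V"
  unfolding V_omega_def
proof (rule the_equality)
  show "quasi_uniformity X (Wc X V) \<and> qprox X (Wc X V) = qprox X V \<and>
    (\<forall>W'. quasi_uniformity X W' \<and> qprox X W' = qprox X V \<longrightarrow> Wc X V \<subseteq> W')"
    using Wc_qu[OF QU] Wc_qprox[OF QU] Wc_min[OF QU] by blast
next
  fix W assume h: "quasi_uniformity X W \<and> qprox X W = qprox X V \<and>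
    (\<forall>W'. quasi_uniformity X W' \<and> qprox X W' = qprox X V \<longrightarrow> W \<subseteq> W')"
  then have "W \<subseteq> Wc X V" using Wc_qu[OF QU] Wc_qprox[OF QU] by blast
  moreover have "Wc X V \<subseteq> W" using Wc_min[OF QU] h by blast
  ultimately show "W = Wc X V" by blast
qed

theorem corollary2p3:
  fixes \<tau> :: "'a topology" and \<V> :: "('a \<times> 'a) set set" and \<alpha> :: "'a set set"
  assumes "\<V> \<in> T_qu \<tau>"
    and "interior_preserving_open_cover \<tau> \<alpha>"
    and "U_cover (topspace \<tau>) \<alpha> \<in> \<V>"
    and "A \<in> \<alpha>"
  shows "A \<in> B_qu \<tau> (V_omega (topspace \<tau>) \<V>)"
proof -
  define X where "X = topspace \<tau>"
  have "compatible_qu \<tau> \<V>" using assms(1) by (simp add: T_qu_def)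
  then have QU: "quasi_uniformity X \<V>" unfolding compatible_qu_def X_def by (rule conjunct1)
  have "\<forall>N\<in>\<alpha>. openin \<tau> N" using assms(2) unfolding interior_preserving_open_cover_def by (rule conjunct1)
  then have opA: "openin \<tau> A" using assms(4) by blast
  then have AX: "A \<subseteq> X" unfolding X_def by (simp add: openin_subset)
  have "U_cover X \<alpha> `` A \<subseteq> A" using assms(4) unfolding U_cover_def by blast
  then have "U_cover X \<alpha> `` A \<inter> (X - A) = {}" by blast
  then have "(A, X - A) \<notin> qprox X \<V>" using nd_iff[of A X "X - A" \<V>] AX assms(3) X_def by blast
  then have "UAB X A (X - A) \<in> SS X \<V>" unfolding SS_def using AX by blast
  moreover have "UAB X A (X - A) = U_set X A" unfolding UAB_def U_set_def using AX by blast
  ultimately have "U_set X A \<in> Wc X \<V>"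
    by (intro WcI[of _ X "{U_set X A}"]) (use AX in \<open>auto simp: U_set_def\<close>)
  then show ?thesis unfolding B_qu_def V_omega_eq[OF QU, folded X_def] X_def[symmetric]
    using opA by (simp add: X_def)
qed

end
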